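(* Let $\epsilon\ge0$ and let $U\in\mathscr P_+$ with $U^\theta\in\mathbb{SO}(k,K)$ for constants $0<k\le K<\infty$; let $J_t=\mathbb E[\int_t^\infty U_s^\theta ds\mid\mathcal F_t]$. If $\epsilon>0$, let $A,B>0$ be the positive solutions of $A=K^{-1}(A^\rho+\epsilon)$ and $B=k^{-1}(B^\rho+\epsilon)$; if $\epsilon=0$, set $A=K^{-\theta}$ and $B=k^{-\theta}$. Let $W$ be the unique fixed point of the operator $F^\epsilon_{U,U}$ for which there are constants $0<c_1\le c_2<\infty$ with $c_1J\le W\le c_2J$ (such a fixed point exists). Then $kA\,J\le W\le KB\,J$.
   Context: Work on a filtered probability space $(\Omega,\mathcal F,(\mathcal F_t)_{t\ge0},\mathbb P)$ with complete continuous filtration and trivial $\mathcal F_0$. $\mathscr P$ denotes progressively measurable processes, $\mathscr P_+$ (resp. $\mathscr P_{++}$) nonnegative (resp. strictly positive) ones. $\theta>1$ is fixed and $\rho=\frac{\theta-1}{\theta}$. For $X\in\mathscr P_+$, $J^X_t=\mathbb E[\int_t^\infty X_sds\mid\mathcal F_t]$. $\mathbb{SO}(k,K)$ is the set of $X\in\mathscr P_{++}$ with $\mathbb E\int_0^\infty X_tdt<\infty$ and $kJ^X\le X\le KJ^X$. For $U\in\mathscr P_+$, let $\mathbb I(h_{EZ},U)=\{W\in\mathscr P_+:\mathbb E\int_0^\infty U_sW_s^\rho ds<\infty\}$, and define $F^\epsilon_{U,U}:\mathbb I(h_{EZ},U)\to\mathscr P_+$ by $F^\epsilon_{U,U}(W)_t=\mathbb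 E[\int_t^\infty (U_sW_s^\rho+\epsilon U_s^\theta)ds\mid\mathcal F_t]$ (a càdlàg version being chosen). A fixed point is $W\in\mathbb I(h_{EZ},U)$ with $F^\epsilon_{U,U}(W)=W$. *)

theory Defs
  imports "HOL-Probability.Probability"
begin

definition filtered_prob_space_std :: "'a measure \<Rightarrow> (real \<Rightarrow> 'a measure) \<Rightarrow> bool" where
  "filtered_prob_space_std M F \<longleftrightarrow>
     prob_space M
   \<comment> \<open>complete probability space\<close>
   \<and> (\<forall>A B. A \<in> null_sets M \<longrightarrow> B \<subseteq> A \<longrightarrow> B \<in> sets M)
   \<comment> \<open>filtration of sub-sigma-algebras, increasing in time\<close>
   \<and> (\<forall>t\<ge>0. subalgebra M (F t))
   \<and> (\<forall>s t. 0 \<le> s \<longrightarrow> s \<le> t \<longrightarrow> sets (F s) \<subseteq> sets (F t))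
   \<comment> \<open>complete filtration: F 0 contains all null sets\<close>
   \<and> null_sets M \<subseteq> sets (F 0)
   \<comment> \<open>right-continuity\<close>
   \<and> (\<forall>t\<ge>0. sets (F t) = (\<Inter>s\<in>{t<..}. sets (F s)))
   \<comment> \<open>left-continuity\<close>
   \<and> (\<forall>t>0. sets (F t) = sigma_sets (space M) (\<Union>s\<in>{0..<t}. sets (F s)))
   \<comment> \<open>trivial F 0\<close>
   \<and> (\<forall>A\<in>sets (F 0). measure M A = 0 \<or> measure M A = 1)"

text \<open>Processes are functions X :: real \<Rightarrow> 'a \<Rightarrow> real (time, outcome); only t \<ge> 0 matters.\<close>

definition progressive :: "'a measure \<Rightarrow> (real \<Rightarrow> 'a measure) \<Rightarrow> (real \<Rightarrow> 'a \<Rightarrow> real) \<Rightarrow> bool" where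
  "progressive M F X \<longleftrightarrow>
     (\<forall>t\<ge>0. (\<lambda>p. X (fst p) (snd p)) \<in> borel_measurable (restrict_space borel {0..t} \<Otimes>\<^sub>M F t))"

definition prog_nonneg :: "'a measure \<Rightarrow> (real \<Rightarrow> 'a measure) \<Rightarrow> (real \<Rightarrow> 'a \<Rightarrow> real) \<Rightarrow> bool" where
  "prog_nonneg M F X \<longleftrightarrow> progressive M F X \<and> (\<forall>t\<ge>0. \<forall>\<omega>\<in>space M. 0 \<le> X t \<omega>)"

definition prog_pos :: "'a measure \<Rightarrow> (real \<Rightarrow> 'a measure) \<Rightarrow> (real \<Rightarrow> 'a \<Rightarrow> real) \<Rightarrow> bool" where
  "prog_pos M F X \<longleftrightarrow> progressive M F X \<and> (\<forall>t\<ge>0. \<forall>\<omega>\<in>space M. 0 < X t \<omega>)"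

definition finite_total :: "'a measure \<Rightarrow> (real \<Rightarrow> 'a \<Rightarrow> real) \<Rightarrow> bool" where
  "finite_total M X \<longleftrightarrow>
     (\<integral>\<^sup>+ \<omega>. (\<integral>\<^sup>+ s. ennreal (X s \<omega>) * indicator {0..} s \<partial>lborel) \<partial>M) < \<infinity>"

definition Jproc :: "'a measure \<Rightarrow> (real \<Rightarrow> 'a measure) \<Rightarrow> (real \<Rightarrow> 'a \<Rightarrow> real) \<Rightarrow> real \<Rightarrow> 'a \<Rightarrow> real" where
  "Jproc M F X t = real_cond_exp M (F t) (\<lambda>\<omega>. LINT s:{t..}|lborel. X s \<omega>)"

definition proc_le :: "'a measure \<Rightarrow> (real \<Rightarrow> 'a \<Rightarrow> real) \<Rightarrow> (real \<Rightarrow> 'a \<Rightarrow> real) \<Rightarrow> bool" where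
  "proc_le M X Y \<longleftrightarrow> (\<forall>t\<ge>0. AE \<omega> in M. X t \<omega> \<le> Y t \<omega>)"

definition SO :: "'a measure \<Rightarrow> (real \<Rightarrow> 'a measure) \<Rightarrow> real \<Rightarrow> real \<Rightarrow> (real \<Rightarrow> 'a \<Rightarrow> real) \<Rightarrow> bool" where
  "SO M F k K X \<longleftrightarrow> prog_pos M F X \<and> finite_total M X
     \<and> proc_le M (\<lambda>t \<omega>. k * Jproc M F X t \<omega>) X
     \<and> proc_le M X (\<lambda>t \<omega>. K * Jproc M F X t \<omega>)"

definition I_EZ :: "'a measure \<Rightarrow> (real \<Rightarrow> 'a measure) \<Rightarrow> real \<Rightarrow> (real \<Rightarrow> 'a \<Rightarrow> real) \<Rightarrow> (real \<Rightarrow> 'a \<Rightarrow> real) \<Rightarrow> bool" where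
  "I_EZ M F \<theta> U W \<longleftrightarrow> prog_nonneg M F W
     \<and> finite_total M (\<lambda>s \<omega>. U s \<omega> * W s \<omega> powr ((\<theta> - 1) / \<theta>))"

definition F_EZ :: "'a measure \<Rightarrow> (real \<Rightarrow> 'a measure) \<Rightarrow> real \<Rightarrow> real \<Rightarrow> (real \<Rightarrow> 'a \<Rightarrow> real) \<Rightarrow> (real \<Rightarrow> 'a \<Rightarrow> real) \<Rightarrow> real \<Rightarrow> 'a \<Rightarrow> real" where
  "F_EZ M F \<theta> \<epsilon> U W =
     Jproc M F (\<lambda>s \<omega>. U s \<omega> * W s \<omega> powr ((\<theta> - 1) / \<theta>) + \<epsilon> * U s \<omega> powr \<theta>)"

definition is_fixed_point_EZ :: "'a measure \<Rightarrow> (real \<Rightarrow> 'a measure) \<Rightarrow> real \<Rightarrow> real \<Rightarrow> (real \<Rightarrow> 'a \<Rightarrow> real) \<Rightarrow> (real \<Rightarrow> 'a \<Rightarrow> real) \<Rightarrow> bool" where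
  "is_fixed_point_EZ M F \<theta> \<epsilon> U W \<longleftrightarrow> I_EZ M F \<theta> U W
     \<and> (\<forall>t\<ge>0. AE \<omega> in M. W t \<omega> = F_EZ M F \<theta> \<epsilon> U W t \<omega>)"

end

theory Submission
  imports Defs
begin

lemma sub_meas:
  assumes "subalgebra M G" "f \<in> measurable N M"
  shows "f \<in> measurable N G"
proof (rule measurableI)
  fix x assume "x \<in> space N" then show "f x \<in> space G"
    using assms measurable_space[OF assms(2)] by (auto simp: subalgebra_def)
next
  fix A assume "A \<in> sets G" then have "A \<in> sets M" using assms(1) by (auto simp: subalgebra_def)
  then show "f -` A \<inter> space N \<in> sets N" using assms(2) by (rule measurable_sets[rotated])
qed

lemma prog_meas:
  assumes P: "filtered_prob_space_std M F" and X: "progressive M F X"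
  shows "(\<lambda>(\<omega>,s). X s \<omega> * indicator {0..} s) \<in> borel_measurable (M \<Otimes>\<^sub>M lborel)"
proof -
  have gn: "(\<lambda>(\<omega>,s). X s \<omega> * indicator {0..real n} s) \<in> borel_measurable (M \<Otimes>\<^sub>M lborel)" for n :: nat
  proof -
    have sub: "subalgebra M (F (real n))" using P unfolding filtered_prob_space_std_def by auto
    have h: "(\<lambda>p. X (fst p) (snd p)) \<in> borel_measurable (restrict_space borel {0..real n} \<Otimes>\<^sub>M F (real n))"
      using X unfolding progressive_def by auto
    define S where "S = space M \<times> {0..real n}"
    have S: "S \<inter> space (M \<Otimes>\<^sub>M lborel) \<in> sets (M \<Otimes>\<^sub>M lborel)"
      unfolding S_def by (auto simp: space_pair_measure)
    have sw: "(\<lambda>(\<omega>,s). (s,\<omega>)) \<in> measurable (restrict_space (M \<Otimes>\<^sub>M lborel) S) (restrict_space borel {0..real n} \<Otimes>\<^sub>M F (real n))"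
    proof (rule measurable_pair)
      show "fst \<circ> (\<lambda>(\<omega>, s). (s, \<omega>)) \<in> measurable (restrict_space (M \<Otimes>\<^sub>M lborel) S) (restrict_space borel {0..real n})"
        apply (rule measurable_restrict_space2)
        apply (auto simp: S_def space_restrict_space space_pair_measure)[1]
        apply (rule measurable_restrict_space1)
        apply (simp add: o_def split_beta)
        done
      show "snd \<circ> (\<lambda>(\<omega>, s). (s, \<omega>)) \<in> measurable (restrict_space (M \<Otimes>\<^sub>M lborel) S) (F (real n))"
        apply (rule sub_meas[OF sub])
        apply (rule measurable_restrict_space1)
        apply (simp add: o_def split_beta)
        done
    qed
    have "(\<lambda>p. X (fst ((\<lambda>(\<omega>,s). (s,\<omega>)) p)) (snd ((\<lambda>(\<omega>,s). (s,\<omega>)) p))) \<in> borel_measurable (restrict_space (M \<Otimes>\<^sub>M lborel) S)"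
      using measurable_comp[OF sw h] by (simp add: o_def)
    then have "(\<lambda>(\<omega>,s). X s \<omega>) \<in> borel_measurable (restrict_space (M \<Otimes>\<^sub>M lborel) S)"
      by (simp add: split_beta)
    then have "(\<lambda>x. indicator S x *\<^sub>R (\<lambda>(\<omega>,s). X s \<omega>) x) \<in> borel_measurable (M \<Otimes>\<^sub>M lborel)"
      using borel_measurable_restrict_space_iff[OF S] by blast
    then show ?thesis
      apply (rule measurable_cong[THEN iffD1, rotated])
      apply (auto simp: S_def space_pair_measure indicator_def)
      done
  qed
  show ?thesis
  proof (rule borel_measurable_LIMSEQ_real[OF _ gn])
    fix x :: "_ \<times> real" assume "x \<in> space (M \<Otimes>\<^sub>M lborel)"
    obtain \<omega> s where xs: "x = (\<omega>, s)" by (cases x)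
    obtain N :: nat where "s \<le> real N" using real_arch_simple by blast
    have "eventually (\<lambda>n. X s \<omega> * indicator {0..real n} s = X s \<omega> * indicator {0..} s) sequentially"
      unfolding eventually_sequentially
      by (rule exI[of _ N]) (use \<open>s \<le> real N\<close> in \<open>auto simp: indicator_def\<close>)
    then show "(\<lambda>n. (\<lambda>(\<omega>, s). X s \<omega> * indicator {0..real n} s) x) \<longlonglongrightarrow> (\<lambda>(\<omega>, s). X s \<omega> * indicator {0..} s) x"
      unfolding xs by (simp add: tendsto_eventually)
  qed
qed

lemma integ:
  fixes f :: "real \<Rightarrow> 'a \<Rightarrow> real"
  assumes meas: "(\<lambda>(\<omega>,s). f s \<omega> * indicator {0..} s) \<in> borel_measurable (M \<Otimes>\<^sub>M lborel)"
    and nn: "\<And>\<omega> s. \<omega> \<in> space M \<Longrightarrow> 0 \<le> s \<Longrightarrow> 0 \<le> f s \<omega>"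
    and fin: "finite_total M f" and t: "0 \<le> t"
  shows "AE \<omega> in M. set_integrable lborel {t..} (\<lambda>s. f s \<omega>)"
    and "integrable M (\<lambda>\<omega>. LINT s:{t..}|lborel. f s \<omega>)"
proof -
  have me: "(\<lambda>(\<omega>,s). ennreal (f s \<omega>) * indicator {0..} s) \<in> borel_measurable (M \<Otimes>\<^sub>M lborel)"
  proof -
    have "(\<lambda>x. ennreal ((\<lambda>(\<omega>,s). f s \<omega> * indicator {0..} s) x)) \<in> borel_measurable (M \<Otimes>\<^sub>M lborel)"
      using meas by measurable
    then show ?thesis
      by (rule measurable_cong[THEN iffD1, rotated]) (auto simp: indicator_def)
  qed
  have mi: "(\<lambda>\<omega>. \<integral>\<^sup>+ s. ennreal (f s \<omega>) * indicator {0..} s \<partial>lborel) \<in> borel_measurable M"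
    using lborel.borel_measurable_nn_integral[of "\<lambda>\<omega> s. ennreal (f s \<omega>) * indicator {0..} s" M] me
    by simp
  have fin_ae: "AE \<omega> in M. (\<integral>\<^sup>+ s. ennreal (f s \<omega>) * indicator {0..} s \<partial>lborel) \<noteq> \<infinity>"
    by (rule nn_integral_PInf_AE[OF mi]) (use fin in \<open>auto simp: finite_total_def\<close>)
  have mt: "(\<lambda>(\<omega>,s). indicator {t..} s *\<^sub>R f s \<omega>) \<in> borel_measurable (M \<Otimes>\<^sub>M lborel)"
  proof -
    have "(\<lambda>x. indicator {t..} (snd x) * (\<lambda>(\<omega>,s). f s \<omega> * indicator {0..} s) x) \<in> borel_measurable (M \<Otimes>\<^sub>M lborel)"
      using meas by measurable
    then show ?thesis
      by (rule measurable_cong[THEN iffD1, rotated]) (use t in \<open>auto simp: indicator_def\<close>)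
  qed
  have bound: "(\<integral>\<^sup>+ s. ennreal (norm (indicator {t..} s *\<^sub>R f s \<omega>)) \<partial>lborel)
      \<le> (\<integral>\<^sup>+ s. ennreal (f s \<omega>) * indicator {0..} s \<partial>lborel)" if "\<omega> \<in> space M" for \<omega>
    by (rule nn_integral_mono) (use t nn[OF that] in \<open>auto simp: indicator_def\<close>)
  have si: "set_integrable lborel {t..} (\<lambda>s. f s \<omega>)"
    if "\<omega> \<in> space M" "(\<integral>\<^sup>+ s. ennreal (f s \<omega>) * indicator {0..} s \<partial>lborel) \<noteq> \<infinity>" for \<omega>
    unfolding set_integrable_def integrable_iff_bounded
  proof
    show "(\<lambda>s. indicator {t..} s *\<^sub>R f s \<omega>) \<in> borel_measurable lborel"
      using measurable_Pair2[OF mt that(1)] by simp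
    show "(\<integral>\<^sup>+ s. ennreal (norm (indicator {t..} s *\<^sub>R f s \<omega>)) \<partial>lborel) < \<infinity>"
      using bound[OF that(1)] that(2) by (simp add: less_top order.strict_trans1)
  qed
  show ae: "AE \<omega> in M. set_integrable lborel {t..} (\<lambda>s. f s \<omega>)"
    using fin_ae AE_space by eventually_elim (use si in auto)
  show "integrable M (\<lambda>\<omega>. LINT s:{t..}|lborel. f s \<omega>)"
    unfolding integrable_iff_bounded
  proof
    show "(\<lambda>\<omega>. LINT s:{t..}|lborel. f s \<omega>) \<in> borel_measurable M"
      unfolding set_lebesgue_integral_def
      using lborel.borel_measurable_lebesgue_integral[of "\<lambda>\<omega> s. indicator {t..} s *\<^sub>R f s \<omega>" M] mt
      by simp
    have "(\<integral>\<^sup>+ \<omega>. ennreal (norm (LINT s:{t..}|lborel. f s \<omega>)) \<partial>M)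
        \<le> (\<integral>\<^sup>+ \<omega>. (\<integral>\<^sup>+ s. ennreal (f s \<omega>) * indicator {0..} s \<partial>lborel) \<partial>M)"
    proof (rule nn_integral_mono_AE)
      show "AE \<omega> in M. ennreal (norm (LINT s:{t..}|lborel. f s \<omega>))
          \<le> (\<integral>\<^sup>+ s. ennreal (f s \<omega>) * indicator {0..} s \<partial>lborel)"
        using ae AE_space
      proof (eventually_elim)
        case (elim \<omega>)
        have eqf: "(\<lambda>s. indicator {t..} s *\<^sub>R norm (f s \<omega>)) = (\<lambda>s. norm (indicator {t..} s *\<^sub>R f s \<omega>))"
          by (auto simp: fun_eq_iff indicator_def)
        have "norm (LINT s:{t..}|lborel. f s \<omega>) \<le> (LINT s:{t..}|lborel. norm (f s \<omega>))"
          using elim(1) by (rule set_integral_norm_bound)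
        also have "ennreal \<dots> = (\<integral>\<^sup>+ s. ennreal (norm (indicator {t..} s *\<^sub>R f s \<omega>)) \<partial>lborel)"
          unfolding set_lebesgue_integral_def eqf
          by (rule nn_integral_eq_integral[symmetric])
             (use elim in \<open>auto simp: set_integrable_def intro: integrable_norm\<close>)
        finally show ?case
          using bound[OF elim(2)] ennreal_leI order_trans by blast
      qed
    qed
    also have "\<dots> < \<infinity>" using fin by (simp add: finite_total_def)
    finally show "(\<integral>\<^sup>+ \<omega>. ennreal (norm (LINT s:{t..}|lborel. f s \<omega>)) \<partial>M) < \<infinity>" .
  qed
qed

lemma csub:
  assumes P: "filtered_prob_space_std M F" and t: "0 \<le> t"
  shows "sigma_finite_subalgebra M (F t)"
proof -
  have "prob_space M" "subalgebra M (F t)" using P t unfolding filtered_prob_space_std_def by auto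
  then have "finite_measure_subalgebra M (F t)"
    unfolding finite_measure_subalgebra_def finite_measure_subalgebra_axioms_def
    using prob_space.finite_measure by blast
  then show ?thesis by (rule finite_measure_subalgebra_is_sigma_finite)
qed

lemma step:
  fixes f g :: "real \<Rightarrow> 'a \<Rightarrow> real"
  assumes P: "filtered_prob_space_std M F" and t: "0 \<le> t"
    and mf: "(\<lambda>(\<omega>,s). f s \<omega> * indicator {0..} s) \<in> borel_measurable (M \<Otimes>\<^sub>M lborel)"
    and nf: "\<And>\<omega> s. \<omega> \<in> space M \<Longrightarrow> 0 \<le> s \<Longrightarrow> 0 \<le> f s \<omega>"
    and ff: "finite_total M f"
    and mg: "(\<lambda>(\<omega>,s). g s \<omega> * indicator {0..} s) \<in> borel_measurable (M \<Otimes>\<^sub>M lborel)"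
    and ng: "\<And>\<omega> s. \<omega> \<in> space M \<Longrightarrow> 0 \<le> s \<Longrightarrow> 0 \<le> g s \<omega>"
    and fg: "finite_total M g"
    and ae: "AE \<omega> in M. AE s in lborel. 0 \<le> s \<longrightarrow> a * g s \<omega> \<le> b * f s \<omega>"
  shows "AE \<omega> in M. a * real_cond_exp M (F t) (\<lambda>\<omega>. LINT s:{t..}|lborel. g s \<omega>) \<omega>
      \<le> b * real_cond_exp M (F t) (\<lambda>\<omega>. LINT s:{t..}|lborel. f s \<omega>) \<omega>"
proof -
  interpret sigma_finite_subalgebra M "F t" using csub[OF P t] .
  have If: "AE \<omega> in M. set_integrable lborel {t..} (\<lambda>s. f s \<omega>)"
      "integrable M (\<lambda>\<omega>. LINT s:{t..}|lborel. f s \<omega>)"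
    using integ[of f M t] mf nf ff t by auto
  have Ig: "AE \<omega> in M. set_integrable lborel {t..} (\<lambda>s. g s \<omega>)"
      "integrable M (\<lambda>\<omega>. LINT s:{t..}|lborel. g s \<omega>)"
    using integ[of g M t] mg ng fg t by auto
  have le: "AE \<omega> in M. a * (LINT s:{t..}|lborel. g s \<omega>) \<le> b * (LINT s:{t..}|lborel. f s \<omega>)"
    using If(1) Ig(1) ae
  proof eventually_elim
    case (elim \<omega>)
    have "a * (LINT s:{t..}|lborel. g s \<omega>) = (LINT s:{t..}|lborel. a * g s \<omega>)" by simp
    also have "\<dots> \<le> (LINT s:{t..}|lborel. b * f s \<omega>)"
      by (rule set_integral_mono_AE) (use elim t in \<open>auto elim!: AE_mp\<close>)
    also have "\<dots> = b * (LINT s:{t..}|lborel. f s \<omega>)" by simp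
    finally show ?case .
  qed
  have "AE \<omega> in M. real_cond_exp M (F t) (\<lambda>\<omega>. a * (LINT s:{t..}|lborel. g s \<omega>)) \<omega>
      \<le> real_cond_exp M (F t) (\<lambda>\<omega>. b * (LINT s:{t..}|lborel. f s \<omega>)) \<omega>"
    by (rule real_cond_exp_mono[OF le]) (use If Ig in auto)
  moreover have "AE \<omega> in M. real_cond_exp M (F t) (\<lambda>\<omega>. a * (LINT s:{t..}|lborel. g s \<omega>)) \<omega>
      = a * real_cond_exp M (F t) (\<lambda>\<omega>. LINT s:{t..}|lborel. g s \<omega>) \<omega>"
    by (rule real_cond_exp_cmult) (use Ig in auto)
  moreover have "AE \<omega> in M. real_cond_exp M (F t) (\<lambda>\<omega>. b * (LINT s:{t..}|lborel. f s \<omega>)) \<omega>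
      = b * real_cond_exp M (F t) (\<lambda>\<omega>. LINT s:{t..}|lborel. f s \<omega>) \<omega>"
    by (rule real_cond_exp_cmult) (use If in auto)
  ultimately show ?thesis by eventually_elim auto
qed

lemma ae_swap:
  fixes X Y :: "real \<Rightarrow> 'a \<Rightarrow> real"
  assumes P: "filtered_prob_space_std M F"
    and mX: "(\<lambda>(\<omega>,s). X s \<omega> * indicator {0..} s) \<in> borel_measurable (M \<Otimes>\<^sub>M lborel)"
    and mY: "(\<lambda>(\<omega>,s). Y s \<omega> * indicator {0..} s) \<in> borel_measurable (M \<Otimes>\<^sub>M lborel)"
    and h: "\<And>s. 0 \<le> s \<Longrightarrow> AE \<omega> in M. Y s \<omega> \<le> X s \<omega>"
  shows "AE \<omega> in M. AE s in lborel. 0 \<le> s \<longrightarrow> Y s \<omega> \<le> X s \<omega>"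
proof -
  have "prob_space M" using P unfolding filtered_prob_space_std_def by auto
  then interpret prob_space M .
  interpret pair_sigma_finite M lborel ..
  let ?Q = "\<lambda>\<omega> s. Y s \<omega> * indicator {0..} s \<le> X s \<omega> * indicator {0..} s"
  have eq: "?Q \<omega> s \<longleftrightarrow> (0 \<le> s \<longrightarrow> Y s \<omega> \<le> X s \<omega>)" for \<omega> s
    by (auto simp: indicator_def)
  have "{x \<in> space (M \<Otimes>\<^sub>M lborel). ?Q (fst x) (snd x)} \<in> sets (M \<Otimes>\<^sub>M lborel)"
  proof -
    have "Measurable.pred (M \<Otimes>\<^sub>M lborel) (\<lambda>x. (\<lambda>(\<omega>,s). Y s \<omega> * indicator {0..} s) x \<le> (\<lambda>(\<omega>,s). X s \<omega> * indicator {0..} s) x)"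
      using mX mY by measurable
    then show ?thesis unfolding pred_def by (simp add: split_beta)
  qed
  note com = AE_commute[OF this]
  have "AE s in lborel. AE \<omega> in M. ?Q \<omega> s"
  proof (rule AE_I2)
    fix s :: real
    show "AE \<omega> in M. ?Q \<omega> s"
    proof (cases "0 \<le> s")
      case True then show ?thesis using h[OF True] by (simp add: indicator_def)
    qed (simp add: eq)
  qed
  then have "AE \<omega> in M. AE s in lborel. ?Q \<omega> s" using com by simp
  then show ?thesis by (simp add: eq)
qed

lemma finite_total_add:
  fixes X Y :: "real \<Rightarrow> 'a \<Rightarrow> real"
  assumes mX: "(\<lambda>(\<omega>,s). X s \<omega> * indicator {0..} s) \<in> borel_measurable (M \<Otimes>\<^sub>M lborel)"
    and mY: "(\<lambda>(\<omega>,s). Y s \<omega> * indicator {0..} s) \<in> borel_measurable (M \<Otimes>\<^sub>M lborel)"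
    and nX: "\<And>\<omega> s. \<omega> \<in> space M \<Longrightarrow> 0 \<le> s \<Longrightarrow> 0 \<le> X s \<omega>"
    and nY: "\<And>\<omega> s. \<omega> \<in> space M \<Longrightarrow> 0 \<le> s \<Longrightarrow> 0 \<le> Y s \<omega>"
    and fX: "finite_total M X" and fY: "finite_total M Y" and c: "0 \<le> c"
  shows "finite_total M (\<lambda>s \<omega>. X s \<omega> + c * Y s \<omega>)"
proof -
  have eX: "(\<lambda>(\<omega>,s). ennreal (X s \<omega>) * indicator {0..} s) \<in> borel_measurable (M \<Otimes>\<^sub>M lborel)"
  proof -
    have "(\<lambda>x. ennreal ((\<lambda>(\<omega>,s). X s \<omega> * indicator {0..} s) x)) \<in> borel_measurable (M \<Otimes>\<^sub>M lborel)"
      using mX by measurable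
    then show ?thesis
      by (rule measurable_cong[THEN iffD1, rotated]) (auto simp: indicator_def)
  qed
  have eY: "(\<lambda>(\<omega>,s). ennreal (Y s \<omega>) * indicator {0..} s) \<in> borel_measurable (M \<Otimes>\<^sub>M lborel)"
  proof -
    have "(\<lambda>x. ennreal ((\<lambda>(\<omega>,s). Y s \<omega> * indicator {0..} s) x)) \<in> borel_measurable (M \<Otimes>\<^sub>M lborel)"
      using mY by measurable
    then show ?thesis
      by (rule measurable_cong[THEN iffD1, rotated]) (auto simp: indicator_def)
  qed
  have iX: "(\<lambda>\<omega>. \<integral>\<^sup>+ s. ennreal (X s \<omega>) * indicator {0..} s \<partial>lborel) \<in> borel_measurable M"
    using lborel.borel_measurable_nn_integral[of "\<lambda>\<omega> s. ennreal (X s \<omega>) * indicator {0..} s" M] eX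
    by simp
  have iY: "(\<lambda>\<omega>. \<integral>\<^sup>+ s. ennreal (Y s \<omega>) * indicator {0..} s \<partial>lborel) \<in> borel_measurable M"
    using lborel.borel_measurable_nn_integral[of "\<lambda>\<omega> s. ennreal (Y s \<omega>) * indicator {0..} s" M] eY
    by simp
  have inner: "(\<integral>\<^sup>+ s. ennreal (X s \<omega> + c * Y s \<omega>) * indicator {0..} s \<partial>lborel)
     = (\<integral>\<^sup>+ s. ennreal (X s \<omega>) * indicator {0..} s \<partial>lborel) + ennreal c * (\<integral>\<^sup>+ s. ennreal (Y s \<omega>) * indicator {0..} s \<partial>lborel)"
    if w: "\<omega> \<in> space M" for \<omega>
  proof -
    have a: "(\<lambda>s. ennreal (X s \<omega>) * indicator {0..} s) \<in> borel_measurable lborel"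
      using measurable_Pair2[OF eX w] by simp
    have b: "(\<lambda>s. ennreal (Y s \<omega>) * indicator {0..} s) \<in> borel_measurable lborel"
      using measurable_Pair2[OF eY w] by simp
    have "(\<integral>\<^sup>+ s. ennreal (X s \<omega> + c * Y s \<omega>) * indicator {0..} s \<partial>lborel)
       = (\<integral>\<^sup>+ s. ennreal (X s \<omega>) * indicator {0..} s + ennreal c * (ennreal (Y s \<omega>) * indicator {0..} s) \<partial>lborel)"
    proof (rule nn_integral_cong)
      fix s :: real
      show "ennreal (X s \<omega> + c * Y s \<omega>) * indicator {0..} s =
          ennreal (X s \<omega>) * indicator {0..} s + ennreal c * (ennreal (Y s \<omega>) * indicator {0..} s)"
        using nX[OF w, of s] nY[OF w, of s] c
        by (cases "0 \<le> s") (auto simp: indicator_def ennreal_plus[symmetric] ennreal_mult[symmetric] simp del: ennreal_plus)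
    qed
    also have "\<dots> = (\<integral>\<^sup>+ s. ennreal (X s \<omega>) * indicator {0..} s \<partial>lborel) + (\<integral>\<^sup>+ s. ennreal c * (ennreal (Y s \<omega>) * indicator {0..} s) \<partial>lborel)"
      by (rule nn_integral_add) (use a b in auto)
    also have "(\<integral>\<^sup>+ s. ennreal c * (ennreal (Y s \<omega>) * indicator {0..} s) \<partial>lborel) = ennreal c * (\<integral>\<^sup>+ s. ennreal (Y s \<omega>) * indicator {0..} s \<partial>lborel)"
      by (rule nn_integral_cmult) (use b in auto)
    finally show ?thesis .
  qed
  have "(\<integral>\<^sup>+ \<omega>. (\<integral>\<^sup>+ s. ennreal (X s \<omega> + c * Y s \<omega>) * indicator {0..} s \<partial>lborel) \<partial>M)
     = (\<integral>\<^sup>+ \<omega>. (\<integral>\<^sup>+ s. ennreal (X s \<omega>) * indicator {0..} s \<partial>lborel) + ennreal c * (\<integral>\<^sup>+ s. ennreal (Y s \<omega>) * indicator {0..} s \<partial>lborel) \<partial>M)"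
    by (rule nn_integral_cong) (rule inner)
  also have "\<dots> = (\<integral>\<^sup>+ \<omega>. (\<integral>\<^sup>+ s. ennreal (X s \<omega>) * indicator {0..} s \<partial>lborel) \<partial>M) + (\<integral>\<^sup>+ \<omega>. ennreal c * (\<integral>\<^sup>+ s. ennreal (Y s \<omega>) * indicator {0..} s \<partial>lborel) \<partial>M)"
    by (rule nn_integral_add) (use iX iY in auto)
  also have "(\<integral>\<^sup>+ \<omega>. ennreal c * (\<integral>\<^sup>+ s. ennreal (Y s \<omega>) * indicator {0..} s \<partial>lborel) \<partial>M) = ennreal c * (\<integral>\<^sup>+ \<omega>. (\<integral>\<^sup>+ s. ennreal (Y s \<omega>) * indicator {0..} s \<partial>lborel) \<partial>M)"
    by (rule nn_integral_cmult) (use iY in auto)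
  finally have eq: "(\<integral>\<^sup>+ \<omega>. (\<integral>\<^sup>+ s. ennreal (X s \<omega> + c * Y s \<omega>) * indicator {0..} s \<partial>lborel) \<partial>M) = (\<integral>\<^sup>+ \<omega>. (\<integral>\<^sup>+ s. ennreal (X s \<omega>) * indicator {0..} s \<partial>lborel) \<partial>M) + ennreal c * (\<integral>\<^sup>+ \<omega>. (\<integral>\<^sup>+ s. ennreal (Y s \<omega>) * indicator {0..} s \<partial>lborel) \<partial>M)" .
  have "ennreal c * (\<integral>\<^sup>+ \<omega>. (\<integral>\<^sup>+ s. ennreal (Y s \<omega>) * indicator {0..} s \<partial>lborel) \<partial>M) < \<infinity>"
    using fY unfolding finite_total_def by (simp add: ennreal_mult_less_top)
  then show ?thesis
    using fX unfolding finite_total_def eq by simp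
qed

lemma fix_low:
  fixes \<rho> \<epsilon> K A x :: real
  assumes r: "0 < \<rho>" "\<rho> < 1" and e: "0 \<le> \<epsilon>" and A: "0 < A" "K * A = A powr \<rho> + \<epsilon>"
    and x: "0 < x" "x powr \<rho> + \<epsilon> \<le> K * x"
  shows "A \<le> x"
proof (rule ccontr)
  assume "\<not> A \<le> x" then have xA: "x < A" by simp
  define p where "p = A powr (\<rho> - 1)"
  define q where "q = x powr (\<rho> - 1)"
  have pq: "p < q" unfolding p_def q_def by (rule powr_less_mono2_neg) (use r x xA in auto)
  have Ap: "A powr \<rho> = A * p" unfolding p_def using A by (simp add: powr_add[symmetric] powr_mult_base)
  have xq: "x powr \<rho> = x * q" unfolding q_def using x by (simp add: powr_add[symmetric] powr_mult_base)
  have K: "K * A = A * p + \<epsilon>" using A Ap by simp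
  have "x * q + \<epsilon> \<le> K * x" using x xq by simp
  then have "A * (x * q + \<epsilon>) \<le> x * (A * p + \<epsilon>)" using K A x
    by (metis mult.commute mult.left_commute mult_left_mono less_imp_le)
  then have "A * x * (q - p) + \<epsilon> * (A - x) \<le> 0" by (simp add: algebra_simps)
  moreover have "A * x * (q - p) > 0" using A x pq by simp
  moreover have "\<epsilon> * (A - x) \<ge> 0" using e xA by simp
  ultimately show False by linarith
qed

lemma fix_up:
  fixes \<rho> \<epsilon> k B x :: real
  assumes r: "0 < \<rho>" "\<rho> < 1" and e: "0 \<le> \<epsilon>" and B: "0 < B" "k * B = B powr \<rho> + \<epsilon>"
    and x: "0 \<le> x" "k * x \<le> x powr \<rho> + \<epsilon>"
  shows "x \<le> B"
proof (rule ccontr)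
  assume "\<not> x \<le> B" then have xB: "B < x" by simp
  then have xp: "0 < x" using B by simp
  define p where "p = B powr (\<rho> - 1)"
  define q where "q = x powr (\<rho> - 1)"
  have pq: "q < p" unfolding p_def q_def by (rule powr_less_mono2_neg) (use r B xB in auto)
  have Bp: "B powr \<rho> = B * p" unfolding p_def using B by (simp add: powr_add[symmetric] powr_mult_base)
  have xq: "x powr \<rho> = x * q" unfolding q_def using xp by (simp add: powr_add[symmetric] powr_mult_base)
  have K: "k * B = B * p + \<epsilon>" using B Bp by simp
  have "k * x \<le> x * q + \<epsilon>" using x xq by simp
  then have "B * (k * x) \<le> B * (x * q + \<epsilon>)" using B by simp
  then have "x * (B * p + \<epsilon>) \<le> B * (x * q + \<epsilon>)" using K by (metis mult.commute mult.left_commute)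
  then have "B * x * (p - q) + \<epsilon> * (x - B) \<le> 0" by (simp add: algebra_simps)
  moreover have "B * x * (p - q) > 0" using B xp pq by simp
  moreover have "\<epsilon> * (x - B) \<ge> 0" using e xB by simp
  ultimately show False by linarith
qed

lemma ae_ex:
  assumes "prob_space M" "AE \<omega> in M. P \<omega>" shows "\<exists>\<omega>. P \<omega>"
proof (rule ccontr)
  assume "\<not> ?thesis" then have "AE \<omega> in M. False" using assms(2) by simp
  then show False using prob_space.AE_False[OF assms(1)] by simp
qed

lemma sup_closed:
  fixes J W :: "real \<Rightarrow> 'a \<Rightarrow> real"
  assumes Jp: "AE \<omega> in M. 0 < J t \<omega>"
    and S: "S \<noteq> {}" "bdd_above S" "\<And>c. c \<in> S \<Longrightarrow> AE \<omega> in M. c * J t \<omega> \<le> W t \<omega>"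
  shows "AE \<omega> in M. Sup S * J t \<omega> \<le> W t \<omega>"
proof -
  have "\<exists>c. c \<in> S \<and> Sup S - 1 / real (Suc n) < c" for n
    using less_cSup_iff[OF S(1,2), of "Sup S - 1 / real (Suc n)"] by auto
  then obtain cn where cn: "\<And>n. cn n \<in> S" "\<And>n. Sup S - 1 / real (Suc n) < cn n" by metis
  have "AE \<omega> in M. \<forall>n. cn n * J t \<omega> \<le> W t \<omega>"
    unfolding AE_all_countable using S(3)[OF cn(1)] by blast
  with Jp show ?thesis
  proof eventually_elim
    case (elim \<omega>)
    show ?case
    proof (rule ccontr)
      assume "\<not> ?case"
      then have "W t \<omega> / J t \<omega> < Sup S" using elim(1) by (simp add: divide_less_eq)
      then obtain n where n: "1 / real (Suc n) < Sup S - W t \<omega> / J t \<omega>"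
        using reals_Archimedean[of "Sup S - W t \<omega> / J t \<omega>"] by (auto simp: inverse_eq_divide)
      then have "W t \<omega> / J t \<omega> < cn n" using cn(2)[of n] by linarith
      then have "W t \<omega> < cn n * J t \<omega>" using elim(1) by (simp add: divide_less_eq)
      then show False using elim(2) by (meson not_le)
    qed
  qed
qed

lemma inf_closed:
  fixes J W :: "real \<Rightarrow> 'a \<Rightarrow> real"
  assumes Jp: "AE \<omega> in M. 0 < J t \<omega>"
    and S: "S \<noteq> {}" "bdd_below S" "\<And>c. c \<in> S \<Longrightarrow> AE \<omega> in M. W t \<omega> \<le> c * J t \<omega>"
  shows "AE \<omega> in M. W t \<omega> \<le> Inf S * J t \<omega>"
proof -
  have "\<exists>c. c \<in> S \<and> c < Inf S + 1 / real (Suc n)" for n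
    using cInf_less_iff[OF S(1,2), of "Inf S + 1 / real (Suc n)"] by auto
  then obtain cn where cn: "\<And>n. cn n \<in> S" "\<And>n. cn n < Inf S + 1 / real (Suc n)" by metis
  have "AE \<omega> in M. \<forall>n. W t \<omega> \<le> cn n * J t \<omega>"
    unfolding AE_all_countable using S(3)[OF cn(1)] by blast
  with Jp show ?thesis
  proof eventually_elim
    case (elim \<omega>)
    show ?case
    proof (rule ccontr)
      assume "\<not> ?case"
      then have "Inf S < W t \<omega> / J t \<omega>" using elim(1) by (simp add: less_divide_eq)
      then obtain n where n: "1 / real (Suc n) < W t \<omega> / J t \<omega> - Inf S"
        using reals_Archimedean[of "W t \<omega> / J t \<omega> - Inf S"] by (auto simp: inverse_eq_divide)
      then have "cn n < W t \<omega> / J t \<omega>" using cn(2)[of n] by linarith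
      then have "cn n * J t \<omega> < W t \<omega>" using elim(1) by (simp add: less_divide_eq)
      then show False using elim(2) by (meson not_le)
    qed
  qed
qed

lemma powr_ident:
  fixes u \<theta> :: real
  assumes "0 < u" "1 < \<theta>"
  shows "u * (u powr \<theta>) powr ((\<theta> - 1) / \<theta>) = u powr \<theta>"
proof -
  have "\<theta> * ((\<theta> - 1) / \<theta>) = \<theta> - 1" using assms by simp
  then have "u * (u powr \<theta>) powr ((\<theta> - 1) / \<theta>) = u powr 1 * u powr (\<theta> - 1)"
    using assms by (simp add: powr_powr del: powr_one)
  also have "\<dots> = u powr (1 + (\<theta> - 1))" by (rule powr_add[symmetric])
  also have "\<dots> = u powr \<theta>" by simp
  finally show ?thesis .
qed

lemma pw_low:
  fixes u w c \<theta> :: real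
  assumes "0 < u" "1 < \<theta>" "0 \<le> c" "c * u powr \<theta> \<le> w"
  shows "c powr ((\<theta> - 1) / \<theta>) * u powr \<theta> \<le> u * w powr ((\<theta> - 1) / \<theta>)"
proof -
  have "c powr ((\<theta> - 1) / \<theta>) * u powr \<theta> = u * (c * u powr \<theta>) powr ((\<theta> - 1) / \<theta>)"
    using powr_ident[OF assms(1,2)] by (simp add: powr_mult algebra_simps)
  also have "\<dots> \<le> u * w powr ((\<theta> - 1) / \<theta>)"
    using assms by (intro mult_left_mono powr_mono2) auto
  finally show ?thesis .
qed

lemma pw_up:
  fixes u w c \<theta> :: real
  assumes "0 < u" "1 < \<theta>" "0 \<le> c" "0 \<le> w" "w \<le> c * u powr \<theta>"
  shows "u * w powr ((\<theta> - 1) / \<theta>) \<le> c powr ((\<theta> - 1) / \<theta>) * u powr \<theta>"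
proof -
  have "u * w powr ((\<theta> - 1) / \<theta>) \<le> u * (c * u powr \<theta>) powr ((\<theta> - 1) / \<theta>)"
    using assms by (intro mult_left_mono powr_mono2) auto
  also have "\<dots> = c powr ((\<theta> - 1) / \<theta>) * u powr \<theta>"
    using powr_ident[OF assms(1,2)] by (simp add: powr_mult algebra_simps)
  finally show ?thesis .
qed

theorem corollary6p4:
  fixes M :: "'a measure" and F :: "real \<Rightarrow> 'a measure"
    and \<theta> \<epsilon> k K A B :: real
    and U W :: "real \<Rightarrow> 'a \<Rightarrow> real"
  assumes space: "filtered_prob_space_std M F"
    and theta: "\<theta> > 1"
    and eps: "\<epsilon> \<ge> 0"
    and kK: "0 < k" "k \<le> K"
    and U: "prog_nonneg M F U"
    and USO: "SO M F k K (\<lambda>t \<omega>. U t \<omega> powr \<theta>)"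
    and AB: "if \<epsilon> > 0 then
               (A > 0 \<and> A = (A powr ((\<theta> - 1) / \<theta>) + \<epsilon>) / K
                \<and> B > 0 \<and> B = (B powr ((\<theta> - 1) / \<theta>) + \<epsilon>) / k)
             else (A = K powr (- \<theta>) \<and> B = k powr (- \<theta>))"
    and W: "is_fixed_point_EZ M F \<theta> \<epsilon> U W"
    and Wbd: "\<exists>c1 c2. 0 < c1 \<and> c1 \<le> c2
               \<and> proc_le M (\<lambda>t \<omega>. c1 * Jproc M F (\<lambda>s \<omega>. U s \<omega> powr \<theta>) t \<omega>) W
               \<and> proc_le M W (\<lambda>t \<omega>. c2 * Jproc M F (\<lambda>s \<omega>. U s \<omega> powr \<theta>) t \<omega>)"
  shows "proc_le M (\<lambda>t \<omega>. k * A * Jproc M F (\<lambda>s \<omega>. U s \<omega> powr \<theta>) t \<omega>) W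
       \<and> proc_le M W (\<lambda>t \<omega>. K * B * Jproc M F (\<lambda>s \<omega>. U s \<omega> powr \<theta>) t \<omega>)"
proof -
  define \<rho> where "\<rho> = (\<theta> - 1) / \<theta>"
  have r: "0 < \<rho>" "\<rho> < 1" using theta by (auto simp: \<rho>_def)
  define V where "V = (\<lambda>t \<omega>. U t \<omega> powr \<theta>)"
  define J where "J = Jproc M F V"
  have P: "prob_space M" using space unfolding filtered_prob_space_std_def by auto
  have Kp: "0 < K" using kK by simp
  have SOV: "SO M F k K V" using USO unfolding V_def .
  then have Vpp: "prog_pos M F V" and fV: "finite_total M V"
    and kJV: "proc_le M (\<lambda>t \<omega>. k * J t \<omega>) V" and VKJ: "proc_le M V (\<lambda>t \<omega>. K * J t \<omega>)"
    unfolding SO_def J_def by auto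
  have Ipp: "prog_nonneg M F W" and fg1: "finite_total M (\<lambda>s \<omega>. U s \<omega> * W s \<omega> powr \<rho>)"
    using W unfolding is_fixed_point_EZ_def I_EZ_def \<rho>_def by auto
  define f where "f = (\<lambda>s \<omega>. U s \<omega> * W s \<omega> powr \<rho> + \<epsilon> * V s \<omega>)"
  have fixed: "AE \<omega> in M. W t \<omega> = real_cond_exp M (F t) (\<lambda>\<omega>. LINT s:{t..}|lborel. f s \<omega>) \<omega>"
    if "0 \<le> t" for t
    using W that unfolding is_fixed_point_EZ_def F_EZ_def Jproc_def f_def \<rho>_def V_def by auto
  have Jt: "J t \<omega> = real_cond_exp M (F t) (\<lambda>\<omega>. LINT s:{t..}|lborel. V s \<omega>) \<omega>" for t \<omega>
    unfolding J_def Jproc_def ..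
  have Vpos: "0 < V s \<omega>" if "\<omega> \<in> space M" "0 \<le> s" for s \<omega>
    using Vpp that unfolding prog_pos_def by auto
  have Unn: "0 \<le> U s \<omega>" if "\<omega> \<in> space M" "0 \<le> s" for s \<omega>
    using U that unfolding prog_nonneg_def by auto
  have Upos: "0 < U s \<omega>" if "\<omega> \<in> space M" "0 \<le> s" for s \<omega>
  proof -
    have "U s \<omega> \<noteq> 0" using Vpos[OF that] unfolding V_def by auto
    then show ?thesis using Unn[OF that] by simp
  qed
  have Wnn: "0 \<le> W s \<omega>" if "\<omega> \<in> space M" "0 \<le> s" for s \<omega>
    using Ipp that unfolding prog_nonneg_def by auto
  have mU: "(\<lambda>(\<omega>,s). U s \<omega> * indicator {0..} s) \<in> borel_measurable (M \<Otimes>\<^sub>M lborel)"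
    using prog_meas[OF space] U unfolding prog_nonneg_def by blast
  have mW: "(\<lambda>(\<omega>,s). W s \<omega> * indicator {0..} s) \<in> borel_measurable (M \<Otimes>\<^sub>M lborel)"
    using prog_meas[OF space] Ipp unfolding prog_nonneg_def by blast
  have mV: "(\<lambda>(\<omega>,s). V s \<omega> * indicator {0..} s) \<in> borel_measurable (M \<Otimes>\<^sub>M lborel)"
    using prog_meas[OF space] Vpp unfolding prog_pos_def by blast
  have mg1: "(\<lambda>(\<omega>,s). U s \<omega> * W s \<omega> powr \<rho> * indicator {0..} s) \<in> borel_measurable (M \<Otimes>\<^sub>M lborel)"
  proof -
    have "(\<lambda>x. (\<lambda>(\<omega>,s). U s \<omega> * indicator {0..} s) x * ((\<lambda>(\<omega>,s). W s \<omega> * indicator {0..} s) x) powr \<rho>)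
        \<in> borel_measurable (M \<Otimes>\<^sub>M lborel)"
      using mU mW by measurable
    then show ?thesis
      by (rule measurable_cong[THEN iffD1, rotated]) (auto simp: indicator_def)
  qed
  have mf: "(\<lambda>(\<omega>,s). f s \<omega> * indicator {0..} s) \<in> borel_measurable (M \<Otimes>\<^sub>M lborel)"
  proof -
    have "(\<lambda>x. (\<lambda>(\<omega>,s). U s \<omega> * W s \<omega> powr \<rho> * indicator {0..} s) x + \<epsilon> * (\<lambda>(\<omega>,s). V s \<omega> * indicator {0..} s) x)
        \<in> borel_measurable (M \<Otimes>\<^sub>M lborel)"
      using mg1 mV by measurable
    then show ?thesis
      by (rule measurable_cong[THEN iffD1, rotated]) (auto simp: indicator_def f_def)
  qed
  have Vnn: "0 \<le> V s \<omega>" if "\<omega> \<in> space M" "0 \<le> s" for s \<omega> using Vpos[OF that] by simp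
  have nf: "0 \<le> f s \<omega>" if "\<omega> \<in> space M" "0 \<le> s" for s \<omega>
    unfolding f_def using Unn[OF that] Vnn[OF that] eps by simp
  have ng1: "0 \<le> U s \<omega> * W s \<omega> powr \<rho>" if "\<omega> \<in> space M" "0 \<le> s" for s \<omega>
    using Unn[OF that] by simp
  have ff: "finite_total M f"
    unfolding f_def by (rule finite_total_add[OF mg1 mV ng1 Vnn fg1 fV eps])
  have Jpos: "AE \<omega> in M. 0 < J t \<omega>" if "0 \<le> t" for t
  proof -
    have "AE \<omega> in M. V t \<omega> \<le> K * J t \<omega>" using VKJ that unfolding proc_le_def by auto
    with AE_space show ?thesis
    proof eventually_elim
      case (elim \<omega>)
      then have "0 < K * J t \<omega>" using Vpos[OF elim(1) that] by linarith
      then show ?case using Kp by (simp add: zero_less_mult_iff)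
    qed
  qed
  have Lstep: "proc_le M (\<lambda>t \<omega>. ((c / K) powr \<rho> + \<epsilon>) * J t \<omega>) W"
    if c: "0 < c" and h: "proc_le M (\<lambda>t \<omega>. c * J t \<omega>) W" for c
    unfolding proc_le_def
  proof (intro allI impI)
    fix t :: real assume t: "0 \<le> t"
    have hs: "AE \<omega> in M. (c / K) * V s \<omega> \<le> W s \<omega>" if s: "0 \<le> s" for s
    proof -
      have "AE \<omega> in M. c * J s \<omega> \<le> W s \<omega>" using h s by (auto simp: proc_le_def)
      moreover have "AE \<omega> in M. V s \<omega> \<le> K * J s \<omega>" using VKJ s by (auto simp: proc_le_def)
      ultimately show ?thesis
      proof eventually_elim
        case (elim \<omega>)
        have "(c / K) * V s \<omega> \<le> (c / K) * (K * J s \<omega>)" using elim(2) c Kp by (intro mult_left_mono) auto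
        also have "\<dots> = c * J s \<omega>" using Kp by simp
        finally show ?case using elim(1) by linarith
      qed
    qed
    have mY: "(\<lambda>(\<omega>,s). (c / K) * V s \<omega> * indicator {0..} s) \<in> borel_measurable (M \<Otimes>\<^sub>M lborel)"
    proof -
      have "(\<lambda>x. (c / K) * (\<lambda>(\<omega>,s). V s \<omega> * indicator {0..} s) x) \<in> borel_measurable (M \<Otimes>\<^sub>M lborel)"
        using mV by measurable
      then show ?thesis by (rule measurable_cong[THEN iffD1, rotated]) (auto simp: indicator_def)
    qed
    have ae1: "AE \<omega> in M. AE s in lborel. 0 \<le> s \<longrightarrow> (c / K) * V s \<omega> \<le> W s \<omega>"
      using ae_swap[of M F W "\<lambda>s \<omega>. (c / K) * V s \<omega>"] space mW mY hs by blast
    have pw: "((c / K) powr \<rho> + \<epsilon>) * V s \<omega> \<le> 1 * f s \<omega>"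
      if "\<omega> \<in> space M" "0 \<le> s" "(c / K) * V s \<omega> \<le> W s \<omega>" for s \<omega>
      using pw_low[OF Upos[OF that(1,2)] theta, of "c / K" "W s \<omega>"] that(3) c Kp
      unfolding f_def V_def \<rho>_def by (simp add: algebra_simps)
    have ae2: "AE \<omega> in M. AE s in lborel. 0 \<le> s \<longrightarrow> ((c / K) powr \<rho> + \<epsilon>) * V s \<omega> \<le> 1 * f s \<omega>"
      using ae1 AE_space
    proof eventually_elim
      case (elim \<omega>)
      from elim(1) show ?case by (rule AE_mp) (rule AE_I2, use pw[OF elim(2)] in blast)
    qed
    have "AE \<omega> in M. ((c / K) powr \<rho> + \<epsilon>) * real_cond_exp M (F t) (\<lambda>\<omega>. LINT s:{t..}|lborel. V s \<omega>) \<omega>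
        \<le> 1 * real_cond_exp M (F t) (\<lambda>\<omega>. LINT s:{t..}|lborel. f s \<omega>) \<omega>"
      by (rule step[OF space t mf nf ff mV Vnn fV ae2])
    with fixed[OF t] show "AE \<omega> in M. ((c / K) powr \<rho> + \<epsilon>) * J t \<omega> \<le> W t \<omega>"
      by eventually_elim (simp add: Jt)
  qed
  have Ustep: "proc_le M W (\<lambda>t \<omega>. ((c / k) powr \<rho> + \<epsilon>) * J t \<omega>)"
    if c: "0 \<le> c" and h: "proc_le M W (\<lambda>t \<omega>. c * J t \<omega>)" for c
    unfolding proc_le_def
  proof (intro allI impI)
    fix t :: real assume t: "0 \<le> t"
    have hs: "AE \<omega> in M. W s \<omega> \<le> (c / k) * V s \<omega>" if s: "0 \<le> s" for s
    proof -
      have "AE \<omega> in M. W s \<omega> \<le> c * J s \<omega>" using h s by (auto simp: proc_le_def)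
      moreover have "AE \<omega> in M. k * J s \<omega> \<le> V s \<omega>" using kJV s by (auto simp: proc_le_def)
      ultimately show ?thesis
      proof eventually_elim
        case (elim \<omega>)
        have "c * J s \<omega> = (c / k) * (k * J s \<omega>)" using kK by simp
        also have "\<dots> \<le> (c / k) * V s \<omega>" using elim(2) c kK by (intro mult_left_mono) auto
        finally show ?case using elim(1) by linarith
      qed
    qed
    have mY: "(\<lambda>(\<omega>,s). (c / k) * V s \<omega> * indicator {0..} s) \<in> borel_measurable (M \<Otimes>\<^sub>M lborel)"
    proof -
      have "(\<lambda>x. (c / k) * (\<lambda>(\<omega>,s). V s \<omega> * indicator {0..} s) x) \<in> borel_measurable (M \<Otimes>\<^sub>M lborel)"
        using mV by measurable
      then show ?thesis by (rule measurable_cong[THEN iffD1, rotated]) (auto simp: indicator_def)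
    qed
    have ae1: "AE \<omega> in M. AE s in lborel. 0 \<le> s \<longrightarrow> W s \<omega> \<le> (c / k) * V s \<omega>"
      using ae_swap[of M F "\<lambda>s \<omega>. (c / k) * V s \<omega>" W] space mW mY hs by blast
    have pw: "1 * f s \<omega> \<le> ((c / k) powr \<rho> + \<epsilon>) * V s \<omega>"
      if "\<omega> \<in> space M" "0 \<le> s" "W s \<omega> \<le> (c / k) * V s \<omega>" for s \<omega>
      using pw_up[OF Upos[OF that(1,2)] theta, of "c / k" "W s \<omega>"] that(3) c kK Wnn[OF that(1,2)]
      unfolding f_def V_def \<rho>_def by (simp add: algebra_simps)
    have ae2: "AE \<omega> in M. AE s in lborel. 0 \<le> s \<longrightarrow> 1 * f s \<omega> \<le> ((c / k) powr \<rho> + \<epsilon>) * V s \<omega>"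
      using ae1 AE_space
    proof eventually_elim
      case (elim \<omega>)
      from elim(1) show ?case by (rule AE_mp) (rule AE_I2, use pw[OF elim(2)] in blast)
    qed
    have "AE \<omega> in M. 1 * real_cond_exp M (F t) (\<lambda>\<omega>. LINT s:{t..}|lborel. f s \<omega>) \<omega>
        \<le> ((c / k) powr \<rho> + \<epsilon>) * real_cond_exp M (F t) (\<lambda>\<omega>. LINT s:{t..}|lborel. V s \<omega>) \<omega>"
      by (rule step[OF space t mV Vnn fV mf nf ff ae2])
    with fixed[OF t] show "AE \<omega> in M. W t \<omega> \<le> ((c / k) powr \<rho> + \<epsilon>) * J t \<omega>"
      by eventually_elim (simp add: Jt)
  qed
  have AB': "0 < A \<and> K * A = A powr \<rho> + \<epsilon> \<and> 0 < B \<and> k * B = B powr \<rho> + \<epsilon>"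
  proof (cases "\<epsilon> > 0")
    case True
    then have "A > 0 \<and> A = (A powr \<rho> + \<epsilon>) / K \<and> B > 0 \<and> B = (B powr \<rho> + \<epsilon>) / k"
      using AB unfolding \<rho>_def by simp
    then show ?thesis using Kp kK by (metis nonzero_mult_div_cancel_left times_divide_eq_right order_less_irrefl)
  next
    case False
    then have e0: "\<epsilon> = 0" and AB0: "A = K powr (- \<theta>)" "B = k powr (- \<theta>)" using AB eps by auto
    have ex: "- \<theta> * \<rho> = 1 + - \<theta>" using theta unfolding \<rho>_def by (simp add: field_simps)
    have gen: "x * x powr (- \<theta>) = (x powr (- \<theta>)) powr \<rho>" if "0 < x" for x :: real
    proof -
      have "(x powr (- \<theta>)) powr \<rho> = x powr (- \<theta> * \<rho>)" by (rule powr_powr)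
      also have "\<dots> = x powr (1 + - \<theta>)" by (simp only: ex)
      also have "\<dots> = x powr 1 * x powr (- \<theta>)" by (rule powr_add)
      finally show ?thesis using that by simp
    qed
    show ?thesis using gen[OF Kp] gen[of k] kK Kp unfolding AB0 e0 by simp
  qed
  then have Ap: "0 < A" and KA: "K * A = A powr \<rho> + \<epsilon>" and Bp: "0 < B" and kB: "k * B = B powr \<rho> + \<epsilon>"
    by auto
  obtain c1 c2 where c: "0 < c1" "c1 \<le> c2" "proc_le M (\<lambda>t \<omega>. c1 * J t \<omega>) W" "proc_le M W (\<lambda>t \<omega>. c2 * J t \<omega>)"
    using Wbd unfolding J_def V_def by auto
  have J0: "\<And>t. 0 \<le> t \<Longrightarrow> AE \<omega> in M. 0 < J t \<omega>" by (rule Jpos)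
  define S where "S = {c. 0 < c \<and> proc_le M (\<lambda>t \<omega>. c * J t \<omega>) W}"
  have c1S: "c1 \<in> S" using c unfolding S_def by auto
  have Sbd: "c \<le> c2" if "c \<in> S" for c
  proof -
    have "AE \<omega> in M. c * J 0 \<omega> \<le> W 0 \<omega>" using that unfolding S_def proc_le_def by auto
    moreover have "AE \<omega> in M. W 0 \<omega> \<le> c2 * J 0 \<omega>" using c unfolding proc_le_def by auto
    ultimately have "AE \<omega> in M. c * J 0 \<omega> \<le> W 0 \<omega> \<and> W 0 \<omega> \<le> c2 * J 0 \<omega> \<and> 0 < J 0 \<omega>"
      using J0[OF order_refl] by eventually_elim auto
    then obtain \<omega> where "c * J 0 \<omega> \<le> W 0 \<omega>" "W 0 \<omega> \<le> c2 * J 0 \<omega>" "0 < J 0 \<omega>"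
      using ae_ex[OF P] by blast
    then show ?thesis by (metis mult_right_le_imp_le order_trans)
  qed
  have Sne: "S \<noteq> {}" using c1S by auto
  have Sbdd: "bdd_above S" using Sbd by (intro bdd_aboveI) auto
  define cs where "cs = Sup S"
  have cs1: "c1 \<le> cs" unfolding cs_def by (rule cSup_upper[OF c1S Sbdd])
  have csS: "cs \<in> S"
    unfolding S_def mem_Collect_eq
  proof
    show "0 < cs" using cs1 c by simp
    show "proc_le M (\<lambda>t \<omega>. cs * J t \<omega>) W" unfolding proc_le_def cs_def
    proof (intro allI impI)
      fix t :: real assume t: "0 \<le> t"
      show "AE \<omega> in M. Sup S * J t \<omega> \<le> W t \<omega>"
        by (rule sup_closed[where J=J and t=t and W=W, OF J0[OF t] Sne Sbdd]) (use t in \<open>auto simp: S_def proc_le_def\<close>)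
    qed
  qed
  have "(cs / K) powr \<rho> + \<epsilon> \<in> S"
    unfolding S_def mem_Collect_eq
  proof
    show "0 < (cs / K) powr \<rho> + \<epsilon>" using cs1 c Kp eps by (simp add: add_pos_nonneg)
    show "proc_le M (\<lambda>t \<omega>. ((cs / K) powr \<rho> + \<epsilon>) * J t \<omega>) W"
      by (rule Lstep) (use csS in \<open>auto simp: S_def\<close>)
  qed
  then have "(cs / K) powr \<rho> + \<epsilon> \<le> cs" unfolding cs_def by (rule cSup_upper[OF _ Sbdd])
  then have "A \<le> cs / K"
    by (intro fix_low[OF r eps Ap KA]) (use cs1 c Kp in auto)
  then have KAcs: "K * A \<le> cs" using Kp by (simp add: field_simps)
  have low: "proc_le M (\<lambda>t \<omega>. k * A * J t \<omega>) W"
    unfolding proc_le_def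
  proof (intro allI impI)
    fix t :: real assume t: "0 \<le> t"
    have "AE \<omega> in M. cs * J t \<omega> \<le> W t \<omega>" using csS t unfolding S_def proc_le_def by auto
    with J0[OF t] show "AE \<omega> in M. k * A * J t \<omega> \<le> W t \<omega>"
    proof eventually_elim
      case (elim \<omega>)
      have "k * A \<le> cs" using KAcs kK Ap by (meson dual_order.trans less_imp_le mult_right_mono)
      then have "k * A * J t \<omega> \<le> cs * J t \<omega>" using elim(1) by (simp add: mult_right_mono)
      then show ?case using elim(2) by linarith
    qed
  qed
  define T where "T = {c. 0 \<le> c \<and> proc_le M W (\<lambda>t \<omega>. c * J t \<omega>)}"
  have c2T: "c2 \<in> T" using c unfolding T_def by auto
  have Tne: "T \<noteq> {}" using c2T by auto
  have Tbdd: "bdd_below T" unfolding T_def by (intro bdd_belowI[of _ 0]) auto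
  define ci where "ci = Inf T"
  have ci0: "0 \<le> ci" unfolding ci_def by (rule cInf_greatest[OF Tne]) (auto simp: T_def)
  have ciT: "ci \<in> T"
    unfolding T_def mem_Collect_eq
  proof
    show "0 \<le> ci" by (rule ci0)
    show "proc_le M W (\<lambda>t \<omega>. ci * J t \<omega>)" unfolding proc_le_def ci_def
    proof (intro allI impI)
      fix t :: real assume t: "0 \<le> t"
      show "AE \<omega> in M. W t \<omega> \<le> Inf T * J t \<omega>"
        by (rule inf_closed[where J=J and t=t and W=W, OF J0[OF t] Tne Tbdd]) (use t in \<open>auto simp: T_def proc_le_def\<close>)
    qed
  qed
  have "(ci / k) powr \<rho> + \<epsilon> \<in> T"
    unfolding T_def mem_Collect_eq
  proof
    show "0 \<le> (ci / k) powr \<rho> + \<epsilon>" using eps by simp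
    show "proc_le M W (\<lambda>t \<omega>. ((ci / k) powr \<rho> + \<epsilon>) * J t \<omega>)"
      by (rule Ustep) (use ciT in \<open>auto simp: T_def\<close>)
  qed
  then have "ci \<le> (ci / k) powr \<rho> + \<epsilon>" unfolding ci_def by (rule cInf_lower[OF _ Tbdd])
  then have "ci / k \<le> B"
    by (intro fix_up[OF r eps Bp kB]) (use ci0 kK in auto)
  then have cikB: "ci \<le> k * B" using kK by (simp add: field_simps)
  have up: "proc_le M W (\<lambda>t \<omega>. K * B * J t \<omega>)"
    unfolding proc_le_def
  proof (intro allI impI)
    fix t :: real assume t: "0 \<le> t"
    have "AE \<omega> in M. W t \<omega> \<le> ci * J t \<omega>" using ciT t unfolding T_def proc_le_def by auto
    with J0[OF t] show "AE \<omega> in M. W t \<omega> \<le> K * B * J t \<omega>"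
    proof eventually_elim
      case (elim \<omega>)
      have "ci \<le> K * B" using cikB kK Bp by (meson dual_order.trans less_imp_le mult_right_mono)
      then have "ci * J t \<omega> \<le> K * B * J t \<omega>" using elim(1) by (simp add: mult_right_mono)
      then show ?case using elim(2) by linarith
    qed
  qed
  show ?thesis using low up unfolding J_def V_def by simp
qed

end
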